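(* Suppose $\sigma$ is an automorphism of $D$ and $f\in D[t;\sigma,\delta]$ is monic of degree $m\ge2$ and irreducible. (i) If $D\subseteq\mathrm{Nuc}_r(S_f)$ then $S_f$ is a division algebra. (ii) If there is a subalgebra $B\subseteq D$ such that $B\subseteq\mathrm{Nuc}_r(S_f)$ and $D$ is free of finite rank as a right $B$-module, then $S_f$ is a division algebra.
   Context: $D$ is an associative division ring, $\sigma$ a ring endomorphism of $D$, $\delta$ a left $\sigma$-derivation. $D[t;\sigma,\delta]$ is the skew polynomial ring with $ta=\sigma(a)t+\delta(a)$. For monic $f$ of degree $m$, $S_f$ is the set of polynomials of degree $<m$ with multiplication $g\circ h=$ remainder of $gh$ upon right division by $f$; $D$ is identified with the constants. $\mathrm{Nuc}_r(S_f)=\{x: (yz)x=y(zx)\ \forall y,z\in S_f\}$. $f$ irreducible means not a unit and no factorization $f=gh$ with $\deg g,\deg h<\deg f$. $S_f$ is a division algebra if left and right multiplication by every nonzero element are bijective. *)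

theory Defs
  imports "HOL-Computational_Algebra.Polynomial"
begin

text \<open>Skew polynomials D[t;sigma,delta] are represented by their coefficient
  sequences (type 'a poly, used only as a container of coefficients; its
  commutative multiplication is NOT used). The coefficient of t^i is coeff p i,
  so p = sum_i (coeff p i) t^i with coefficients written on the left.\<close>

definition is_automorphism :: "('a::division_ring \<Rightarrow> 'a) \<Rightarrow> bool" where
  "is_automorphism \<sigma> \<longleftrightarrow> bij \<sigma> \<and> (\<forall>a b. \<sigma> (a + b) = \<sigma> a + \<sigma> b)
     \<and> (\<forall>a b. \<sigma> (a * b) = \<sigma> a * \<sigma> b) \<and> \<sigma> 1 = 1"

definition is_left_sigma_derivation :: "('a::division_ring \<Rightarrow> 'a) \<Rightarrow> ('a \<Rightarrow> 'a) \<Rightarrow> bool" where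
  "is_left_sigma_derivation \<sigma> \<delta> \<longleftrightarrow> (\<forall>a b. \<delta> (a + b) = \<delta> a + \<delta> b)
     \<and> (\<forall>a b. \<delta> (a * b) = \<sigma> a * \<delta> b + \<delta> a * b)"

text \<open>Left multiplication by t: t * (sum a_i t^i) = sum (sigma(a_i) t^(i+1) + delta(a_i) t^i).\<close>
definition skew_tmult :: "('a::division_ring \<Rightarrow> 'a) \<Rightarrow> ('a \<Rightarrow> 'a) \<Rightarrow> 'a poly \<Rightarrow> 'a poly" where
  "skew_tmult \<sigma> \<delta> p = pCons 0 (map_poly \<sigma> p) + map_poly \<delta> p"

definition const_lmult :: "'a::division_ring \<Rightarrow> 'a poly \<Rightarrow> 'a poly" where
  "const_lmult a p = map_poly (\<lambda>c. a * c) p"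

definition skew_mult :: "('a::division_ring \<Rightarrow> 'a) \<Rightarrow> ('a \<Rightarrow> 'a) \<Rightarrow> 'a poly \<Rightarrow> 'a poly \<Rightarrow> 'a poly" where
  "skew_mult \<sigma> \<delta> p q = (\<Sum>i\<le>degree p. const_lmult (coeff p i) ((skew_tmult \<sigma> \<delta> ^^ i) q))"

definition skew_unit :: "('a::division_ring \<Rightarrow> 'a) \<Rightarrow> ('a \<Rightarrow> 'a) \<Rightarrow> 'a poly \<Rightarrow> bool" where
  "skew_unit \<sigma> \<delta> f \<longleftrightarrow> (\<exists>g. skew_mult \<sigma> \<delta> g f = [:1:] \<and> skew_mult \<sigma> \<delta> f g = [:1:])"

definition skew_irreducible :: "('a::division_ring \<Rightarrow> 'a) \<Rightarrow> ('a \<Rightarrow> 'a) \<Rightarrow> 'a poly \<Rightarrow> bool" where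
  "skew_irreducible \<sigma> \<delta> f \<longleftrightarrow> \<not> skew_unit \<sigma> \<delta> f \<and>
     (\<forall>g h. f = skew_mult \<sigma> \<delta> g h \<longrightarrow> \<not> (degree g < degree f \<and> degree h < degree f))"

definition skew_rem :: "('a::division_ring \<Rightarrow> 'a) \<Rightarrow> ('a \<Rightarrow> 'a) \<Rightarrow> 'a poly \<Rightarrow> 'a poly \<Rightarrow> 'a poly" where
  "skew_rem \<sigma> \<delta> g f = (THE r. degree r < degree f \<and> (\<exists>q. g = skew_mult \<sigma> \<delta> q f + r))"

definition Sf :: "'a::division_ring poly \<Rightarrow> 'a poly set" where
  "Sf f = {g. degree g < degree f}"

definition Sf_mult :: "('a::division_ring \<Rightarrow> 'a) \<Rightarrow> ('a \<Rightarrow> 'a) \<Rightarrow> 'a poly \<Rightarrow> 'a poly \<Rightarrow> 'a poly \<Rightarrow> 'a poly" where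
  "Sf_mult \<sigma> \<delta> f g h = skew_rem \<sigma> \<delta> (skew_mult \<sigma> \<delta> g h) f"

definition Nuc_r :: "('a::division_ring \<Rightarrow> 'a) \<Rightarrow> ('a \<Rightarrow> 'a) \<Rightarrow> 'a poly \<Rightarrow> 'a poly set" where
  "Nuc_r \<sigma> \<delta> f = {x \<in> Sf f. \<forall>y\<in>Sf f. \<forall>z\<in>Sf f.
      Sf_mult \<sigma> \<delta> f (Sf_mult \<sigma> \<delta> f y z) x = Sf_mult \<sigma> \<delta> f y (Sf_mult \<sigma> \<delta> f z x)}"

definition Sf_division_algebra :: "('a::division_ring \<Rightarrow> 'a) \<Rightarrow> ('a \<Rightarrow> 'a) \<Rightarrow> 'a poly \<Rightarrow> bool" where
  "Sf_division_algebra \<sigma> \<delta> f \<longleftrightarrow> (\<forall>a\<in>Sf f. a \<noteq> 0 \<longrightarrow>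
      bij_betw (\<lambda>x. Sf_mult \<sigma> \<delta> f a x) (Sf f) (Sf f) \<and>
      bij_betw (\<lambda>x. Sf_mult \<sigma> \<delta> f x a) (Sf f) (Sf f))"

text \<open>The base field F = C(D) \<inter> Fix(sigma) \<inter> Const(delta) over which S_f is an algebra.\<close>
definition base_field :: "('a::division_ring \<Rightarrow> 'a) \<Rightarrow> ('a \<Rightarrow> 'a) \<Rightarrow> 'a set" where
  "base_field \<sigma> \<delta> = {c. (\<forall>d. c * d = d * c) \<and> \<sigma> c = c \<and> \<delta> c = 0}"

definition is_subalgebra :: "('a::division_ring \<Rightarrow> 'a) \<Rightarrow> ('a \<Rightarrow> 'a) \<Rightarrow> 'a set \<Rightarrow> bool" where
  "is_subalgebra \<sigma> \<delta> B \<longleftrightarrow> base_field \<sigma> \<delta> \<subseteq> B \<and> 1 \<in> B \<and>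
     (\<forall>x\<in>B. \<forall>y\<in>B. x + y \<in> B \<and> x * y \<in> B) \<and> (\<forall>x\<in>B. - x \<in> B)"

definition free_finite_right_module :: "'a::division_ring set \<Rightarrow> bool" where
  "free_finite_right_module B \<longleftrightarrow> (\<exists>(n::nat) (b::nat \<Rightarrow> 'a). \<forall>d. \<exists>!\<beta>::nat \<Rightarrow> 'a.
      (\<forall>i<n. \<beta> i \<in> B) \<and> (\<forall>i\<ge>n. \<beta> i = 0) \<and> d = (\<Sum>i<n. b i * \<beta> i))"

end

theory Submission
  imports Defs
begin

locale dmod =
  fixes K :: "'a::division_ring set" and mul :: "'a \<Rightarrow> 'a \<Rightarrow> 'a"
    and act :: "'a \<Rightarrow> 'v::ab_group_add \<Rightarrow> 'v"
  assumes K0: "0 \<in> K" and K1: "1 \<in> K" and Kadd: "c \<in> K \<Longrightarrow> d \<in> K \<Longrightarrow> c + d \<in> K"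
    and Kneg: "c \<in> K \<Longrightarrow> - c \<in> K" and Kmul: "c \<in> K \<Longrightarrow> d \<in> K \<Longrightarrow> mul c d \<in> K"
    and Kinv: "c \<in> K \<Longrightarrow> c \<noteq> 0 \<Longrightarrow> inverse c \<in> K"
    and mul_assoc: "mul (mul a b) c = mul a (mul b c)"
    and mul_1L: "mul 1 a = a" and mul_1R: "mul a 1 = a"
    and mul_distL: "mul a (b + c) = mul a b + mul a c"
    and mul_distR: "mul (a + b) c = mul a c + mul b c"
    and mul_invL: "a \<noteq> 0 \<Longrightarrow> mul (inverse a) a = 1"
    and mul_invR: "a \<noteq> 0 \<Longrightarrow> mul a (inverse a) = 1"
    and act_addS: "act (c + d) v = act c v + act d v"
    and act_addV: "act c (v + w) = act c v + act c w"
    and act_mul: "act (mul c d) v = act c (act d v)"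
    and act_1: "act 1 v = v"
begin

lemma act_0S[simp]: "act 0 v = 0"
  using act_addS[of 0 0 v] by simp

lemma act_0V[simp]: "act c 0 = 0"
  using act_addV[of c 0 0] by simp

lemma act_negS: "act (- c) v = - act c v"
proof -
  have "act c v + act (-c) v = 0" using act_addS[of c "-c" v] by simp
  then have "- act c v = act (-c) v" by (rule minus_unique)
  then show ?thesis by (rule sym)
qed

lemma act_negV: "act c (- v) = - act c v"
proof -
  have "act c v + act c (-v) = 0" using act_addV[of c v "-v"] by simp
  then have "- act c v = act c (-v)" by (rule minus_unique)
  then show ?thesis by (rule sym)
qed

lemma act_diffV: "act c (v - w) = act c v - act c w"
  using act_addV[of c v "-w"] act_negV by simp

lemma act_diffS: "act (c - d) v = act c v - act d v"
  using act_addS[of c "-d" v] act_negS by simp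

lemma act_sumV: "act c (\<Sum>i\<in>A. f i) = (\<Sum>i\<in>A. act c (f i))"
  by (induction A rule: infinite_finite_induct) (auto simp: act_addV)

lemma act_sumS: "act (\<Sum>i\<in>A. f i) v = (\<Sum>i\<in>A. act (f i) v)"
  by (induction A rule: infinite_finite_induct) (auto simp: act_addS)

lemma mul_0R[simp]: "mul a 0 = 0"
  using mul_distL[of a 0 0] by simp

lemma mul_0L[simp]: "mul 0 a = 0"
  using mul_distR[of 0 0 a] by simp

lemma mul_negR: "mul a (- b) = - mul a b"
proof -
  have "mul a b + mul a (-b) = 0" using mul_distL[of a b "-b"] by simp
  then have "- mul a b = mul a (-b)" by (rule minus_unique)
  then show ?thesis by (rule sym)
qed

lemma Ksum: "(\<And>i. i \<in> A \<Longrightarrow> f i \<in> K) \<Longrightarrow> sum f A \<in> K"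
  by (induction A rule: infinite_finite_induct) (auto simp: K0 Kadd)

definition span :: "'i set \<Rightarrow> ('i \<Rightarrow> 'v) \<Rightarrow> 'v set" where
  "span I u = {x. \<exists>c. (\<forall>i\<in>I. c i \<in> K) \<and> x = (\<Sum>i\<in>I. act (c i) (u i))}"

lemma steinitz:
  assumes "finite I"
  shows "\<forall>(J::'j set) w. finite J \<and> card J > card I \<and> (\<forall>j\<in>J. w j \<in> span I u) \<longrightarrow>
     (\<exists>c. (\<forall>j\<in>J. c j \<in> K) \<and> (\<exists>j\<in>J. c j \<noteq> 0) \<and> (\<Sum>j\<in>J. act (c j) (w j)) = 0)"
  using assms
proof (induction I rule: finite_induct)
  case empty
  show ?case
  proof (intro allI impI)
    fix J :: "'j set" and w
    assume H: "finite J \<and> card J > card ({}::'i set) \<and> (\<forall>j\<in>J. w j \<in> span {} u)"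
    then have "J \<noteq> {}" by auto
    then obtain j where "j \<in> J" by auto
    moreover have "\<forall>j\<in>J. w j = 0" using H by (auto simp: span_def)
    ultimately show "\<exists>c. (\<forall>j\<in>J. c j \<in> K) \<and> (\<exists>j\<in>J. c j \<noteq> 0) \<and> (\<Sum>j\<in>J. act (c j) (w j)) = 0"
      by (intro exI[of _ "\<lambda>_. 1"]) (auto simp: K1)
  qed
next
  case (insert x I)
  show ?case
  proof (intro allI impI)
    fix J :: "'j set" and w
    assume H: "finite J \<and> card J > card (insert x I) \<and> (\<forall>j\<in>J. w j \<in> span (insert x I) u)"
    have cardJ: "card J > card I + 1" using H insert.hyps by simp
    have "\<forall>j\<in>J. \<exists>c. (\<forall>i\<in>insert x I. c i \<in> K) \<and> w j = (\<Sum>i\<in>insert x I. act (c i) (u i))"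
      using H by (auto simp: span_def)
    from bchoice[OF this] obtain C where C0: "\<forall>j\<in>J. (\<forall>i\<in>insert x I. C j i \<in> K) \<and> w j = (\<Sum>i\<in>insert x I. act (C j i) (u i))"
      by blast
    then have C: "\<And>j. j \<in> J \<Longrightarrow> (\<forall>i\<in>insert x I. C j i \<in> K) \<and> w j = (\<Sum>i\<in>insert x I. act (C j i) (u i))"
      by blast
    have wj: "w j = act (C j x) (u x) + (\<Sum>i\<in>I. act (C j i) (u i))" if "j \<in> J" for j
      using C[OF that] insert.hyps by simp
    show "\<exists>c. (\<forall>j\<in>J. c j \<in> K) \<and> (\<exists>j\<in>J. c j \<noteq> 0) \<and> (\<Sum>j\<in>J. act (c j) (w j)) = 0"
    proof (cases "\<forall>j\<in>J. C j x = 0")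
      case True
      have "\<forall>j\<in>J. w j \<in> span I u"
      proof
        fix j assume j: "j \<in> J"
        show "w j \<in> span I u" unfolding span_def
          using C[OF j] wj[OF j] True j by (intro CollectI exI[of _ "C j"]) auto
      qed
      moreover have "card J > card I" using cardJ by simp
      ultimately show ?thesis using insert.IH H by blast
    next
      case False
      then obtain k where k: "k \<in> J" "C k x \<noteq> 0" by auto
      define e where "e = inverse (C k x)"
      have eK: "e \<in> K" using C[OF k(1)] k(2) Kinv by (simp add: e_def)
      define w' where "w' j = w j - act (mul (C j x) e) (w k)" for j
      have w'span: "w' j \<in> span I u" if "j \<in> J" for j
      proof -
        define c where "c i = C j i - mul (mul (C j x) e) (C k i)" for i
        have m1: "mul (mul (C j x) e) (C k x) = C j x"
          unfolding e_def mul_assoc mul_invL[OF k(2)] mul_1R ..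
        have "w' j = (act (C j x) (u x) + (\<Sum>i\<in>I. act (C j i) (u i)))
           - (act (C j x) (u x) + (\<Sum>i\<in>I. act (mul (mul (C j x) e) (C k i)) (u i)))"
          unfolding w'_def wj[OF that] wj[OF k(1)] act_addV act_sumV act_mul[symmetric] m1 ..
        also have "\<dots> = (\<Sum>i\<in>I. act (c i) (u i))"
          unfolding c_def act_diffS sum_subtractf by (rule add_diff_cancel_left)
        finally have "w' j = (\<Sum>i\<in>I. act (c i) (u i))" .
        moreover have "\<forall>i\<in>I. c i \<in> K"
        proof
          fix i assume i: "i \<in> I"
          have "C j i \<in> K" "C k i \<in> K" "C j x \<in> K" using C[OF that] C[OF k(1)] i by auto
          then show "c i \<in> K" unfolding c_def diff_conv_add_uminus using eK
            by (intro Kadd Kneg Kmul)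
        qed
        ultimately show ?thesis unfolding span_def by blast
      qed
      have "finite (J - {k}) \<and> card (J - {k}) > card I \<and> (\<forall>j\<in>J - {k}. w' j \<in> span I u)"
        using H cardJ k w'span by auto
      then obtain c where c: "\<forall>j\<in>J - {k}. c j \<in> K" "\<exists>j\<in>J - {k}. c j \<noteq> 0"
          "(\<Sum>j\<in>J - {k}. act (c j) (w' j)) = 0"
        using insert.IH by blast
      define s where "s = (\<Sum>j\<in>J - {k}. mul (c j) (mul (C j x) e))"
      define c' where "c' = c(k := - s)"
      have "(\<Sum>j\<in>J - {k}. act (c j) (w' j)) =
          (\<Sum>j\<in>J - {k}. act (c j) (w j)) - (\<Sum>j\<in>J - {k}. act (mul (c j) (mul (C j x) e)) (w k))"
        by (simp add: w'_def act_diffV act_mul sum_subtractf)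
      also have "(\<Sum>j\<in>J - {k}. act (mul (c j) (mul (C j x) e)) (w k)) = act s (w k)"
        by (simp add: s_def act_sumS)
      finally have eq0: "(\<Sum>j\<in>J - {k}. act (c j) (w j)) - act s (w k) = 0" using c(3) by simp
      have "(\<Sum>j\<in>J. act (c' j) (w j)) = act (c' k) (w k) + (\<Sum>j\<in>J - {k}. act (c' j) (w j))"
        using H k(1) by (simp add: sum.remove)
      also have "(\<Sum>j\<in>J - {k}. act (c' j) (w j)) = (\<Sum>j\<in>J - {k}. act (c j) (w j))"
        by (rule sum.cong) (auto simp: c'_def)
      finally have "(\<Sum>j\<in>J. act (c' j) (w j)) = 0"
        using eq0 by (simp add: c'_def act_negS)
      moreover have "\<forall>j\<in>J. c' j \<in> K"
      proof -
        have "s \<in> K" unfolding s_def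
          using c(1) C eK by (auto intro!: Ksum Kmul)
        then show ?thesis using c(1) by (auto simp: c'_def intro: Kneg)
      qed
      moreover have "\<exists>j\<in>J. c' j \<noteq> 0" using c(2) by (auto simp: c'_def)
      ultimately show ?thesis by blast
    qed
  qed
qed


lemma span_in:
  assumes "\<forall>i\<in>I. u i \<in> V" and Vadd: "\<forall>x\<in>V. \<forall>y\<in>V. x + y \<in> V"
    and Vact: "\<forall>c\<in>K. \<forall>x\<in>V. act c x \<in> V" and V0: "0 \<in> V"
    and "x \<in> span I u"
  shows "x \<in> V"
proof -
  obtain c where c: "\<forall>i\<in>I. c i \<in> K" "x = (\<Sum>i\<in>I. act (c i) (u i))"
    using assms(5) unfolding span_def by blast
  have "(\<Sum>i\<in>I'. act (c i) (u i)) \<in> V" if "I' \<subseteq> I" for I'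
    using that
    by (induction I' rule: infinite_finite_induct) (use V0 Vadd Vact c assms(1) in auto)
  then show ?thesis using c by auto
qed

lemma inj_imp_surj:
  fixes V :: "'v set" and I :: "'i set" and u :: "'i \<Rightarrow> 'v" and L :: "'v \<Rightarrow> 'v"
  assumes fin: "finite I" and uV: "\<forall>i\<in>I. u i \<in> V" and Vspan: "V \<subseteq> span I u"
    and Vadd: "\<forall>x\<in>V. \<forall>y\<in>V. x + y \<in> V" and Vact: "\<forall>c\<in>K. \<forall>x\<in>V. act c x \<in> V" and V0: "0 \<in> V"
    and LV: "\<forall>x\<in>V. L x \<in> V" and Ladd: "\<forall>x\<in>V. \<forall>y\<in>V. L (x + y) = L x + L y"
    and Lact: "\<forall>c\<in>K. \<forall>x\<in>V. L (act c x) = act c (L x)"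
    and Linj: "\<forall>x\<in>V. L x = 0 \<longrightarrow> x = 0"
  shows "\<forall>w\<in>V. \<exists>x\<in>V. L x = w"
proof -
  define P where "P n \<longleftrightarrow> (\<exists>I'::'i set. \<exists>u'. finite I' \<and> card I' = n \<and> (\<forall>i\<in>I'. u' i \<in> V) \<and> V \<subseteq> span I' u')" for n
  have "P (card I)" unfolding P_def using fin uV Vspan by blast
  then obtain n where Pn: "P n" and nmin: "\<And>k. k < n \<Longrightarrow> \<not> P k"
    using exists_least_iff[of P] by blast
  then obtain I' :: "'i set" and u' where I': "finite I'" "card I' = n" "\<forall>i\<in>I'. u' i \<in> V" "V \<subseteq> span I' u'"
    unfolding P_def by blast
  have indep: "\<forall>i\<in>I'. c i = 0" if cK: "\<forall>i\<in>I'. c i \<in> K" and c0: "(\<Sum>i\<in>I'. act (c i) (u' i)) = 0" for c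
  proof (rule ccontr)
    assume "\<not> (\<forall>i\<in>I'. c i = 0)"
    then obtain k where k: "k \<in> I'" "c k \<noteq> 0" by auto
    define b where "b i = - mul (inverse (c k)) (c i)" for i
    have bK: "\<forall>i\<in>I'. b i \<in> K" using cK k by (auto simp: b_def intro!: Kneg Kmul Kinv)
    have "0 = act (c k) (u' k) + (\<Sum>i\<in>I' - {k}. act (c i) (u' i))"
      using c0 k I'(1) by (simp add: sum.remove)
    then have "0 = act (inverse (c k)) (act (c k) (u' k) + (\<Sum>i\<in>I' - {k}. act (c i) (u' i)))"
      by simp
    also have "\<dots> = u' k + (\<Sum>i\<in>I' - {k}. act (mul (inverse (c k)) (c i)) (u' i))"
      unfolding act_addV act_sumV act_mul[symmetric] mul_invL[OF k(2)] act_1 ..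
    finally have uk: "u' k = (\<Sum>i\<in>I' - {k}. act (b i) (u' i))"
      unfolding b_def act_negS sum_negf by (simp add: eq_neg_iff_add_eq_0)
    have "V \<subseteq> span (I' - {k}) u'"
    proof
      fix x assume "x \<in> V"
      then obtain a where a: "\<forall>i\<in>I'. a i \<in> K" "x = (\<Sum>i\<in>I'. act (a i) (u' i))"
        using I'(4) unfolding span_def by blast
      have "x = act (a k) (u' k) + (\<Sum>i\<in>I' - {k}. act (a i) (u' i))"
        using a(2) k I'(1) by (simp add: sum.remove)
      also have "\<dots> = (\<Sum>i\<in>I' - {k}. act (mul (a k) (b i) + a i) (u' i))"
        unfolding uk act_sumV act_mul[symmetric] act_addS sum.distrib ..
      finally have "x = (\<Sum>i\<in>I' - {k}. act (mul (a k) (b i) + a i) (u' i))" .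
      moreover have "\<forall>i\<in>I' - {k}. mul (a k) (b i) + a i \<in> K"
        using a(1) bK k by (auto intro!: Kadd Kmul)
      ultimately show "x \<in> span (I' - {k}) u'" unfolding span_def
        by (intro CollectI exI[of _ "\<lambda>i. mul (a k) (b i) + a i"]) simp
    qed
    then have "P (n - 1)" unfolding P_def using I' k
      by (intro exI[of _ "I' - {k}"] exI[of _ u']) auto
    moreover have "n - 1 < n" using I' k by (metis card_gt_0_iff diff_less empty_iff zero_less_one)
    ultimately show False using nmin by blast
  qed
  have Vneg: "- x \<in> V" if "x \<in> V" for x
    using Vact that Kneg[OF K1] act_negS[of 1 x] act_1[of x] by metis
  have L0: "L 0 = 0" using Ladd V0 by (metis add_cancel_right_right)
  have Lsum: "L (\<Sum>i\<in>A. f i) = (\<Sum>i\<in>A. L (f i))" if "\<forall>i\<in>A. f i \<in> V" for A and f :: "'i \<Rightarrow> 'v"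
    using that
  proof (induction A rule: infinite_finite_induct)
    case (insert a A)
    have "(\<Sum>i\<in>A. f i) \<in> V"
      using insert.prems by (intro span_in[of A f V, OF _ Vadd Vact V0]) (auto simp: span_def act_1 intro!: exI[of _ "\<lambda>_. 1"] K1)
    then show ?case using insert Ladd by simp
  qed (auto simp: L0)
  show ?thesis
  proof
    fix w assume wV: "w \<in> V"
    define J where "J = insert None (Some ` I')"
    define ww where "ww j = (case j of None \<Rightarrow> w | Some i \<Rightarrow> L (u' i))" for j
    have "finite J" "card J > card I'" using I'(1) by (auto simp: J_def card_insert_if card_image)
    moreover have "\<forall>j\<in>J. ww j \<in> span I' u'"
      using I'(3,4) wV LV by (auto simp: J_def ww_def)
    ultimately obtain c where c: "\<forall>j\<in>J. c j \<in> K" "\<exists>j\<in>J. c j \<noteq> 0" "(\<Sum>j\<in>J. act (c j) (ww j)) = 0"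
      using steinitz[OF I'(1), rule_format, of J ww] by blast
    define y where "y = (\<Sum>i\<in>I'. act (c (Some i)) (u' i))"
    have yV: "y \<in> V" unfolding y_def
      by (rule span_in[OF I'(3) Vadd Vact V0]) (use c(1) in \<open>auto simp: span_def J_def\<close>)
    have Ly: "L y = (\<Sum>i\<in>I'. act (c (Some i)) (L (u' i)))"
      unfolding y_def using I'(3) Vact c(1) by (subst Lsum) (auto simp: J_def Lact)
    have "(\<Sum>j\<in>J. act (c j) (ww j)) = act (c None) w + (\<Sum>j\<in>Some ` I'. act (c j) (ww j))"
      using I'(1) by (simp add: J_def ww_def)
    also have "(\<Sum>j\<in>Some ` I'. act (c j) (ww j)) = L y"
      by (simp add: sum.reindex Ly ww_def)
    finally have eq: "act (c None) w + L y = 0" using c(3) by simp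
    show "\<exists>x\<in>V. L x = w"
    proof (cases "c None = 0")
      case True
      then have "L y = 0" using eq by simp
      then have "y = 0" using Linj yV by blast
      then have "\<forall>i\<in>I'. c (Some i) = 0" using indep[of "\<lambda>i. c (Some i)"] c(1) by (auto simp: y_def J_def)
      then show ?thesis using c(2) True by (auto simp: J_def)
    next
      case False
      have cK: "c None \<in> K" using c(1) by (simp add: J_def)
      define x where "x = act (inverse (c None)) (- y)"
      have xV: "x \<in> V" unfolding x_def using Vact Kinv[OF cK False] Vneg[OF yV] by blast
      have "L x = act (inverse (c None)) (L (- y))"
        unfolding x_def using Lact Kinv[OF cK False] Vneg[OF yV] by blast
      also have "L (- y) = - L y"
        using Ladd[rule_format, OF yV Vneg[OF yV]] L0 by (simp add: eq_neg_iff_add_eq_0 add.commute)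
      also have "- L y = act (c None) w"
      proof -
        have "L y + act (c None) w = 0" using eq by (simp add: add.commute)
        then show ?thesis by (rule minus_unique)
      qed
      also have "act (inverse (c None)) (act (c None) w) = w"
        unfolding act_mul[symmetric] mul_invL[OF False] act_1 ..
      finally show ?thesis using xV by blast
    qed
  qed
qed
end

lemma CL_coeff: "coeff (const_lmult c p) n = c * coeff p n"
  unfolding const_lmult_def by (simp add: coeff_map_poly)

lemma CL_add: "const_lmult c (p + q) = const_lmult c p + const_lmult c q"
  by (rule poly_eqI) (simp add: CL_coeff distrib_left)
lemma CL_addS: "const_lmult (c + d) p = const_lmult c p + const_lmult d p"
  by (rule poly_eqI) (simp add: CL_coeff distrib_right)
lemma CL_mult: "const_lmult (c * d) p = const_lmult c (const_lmult d p)"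
  by (rule poly_eqI) (simp add: CL_coeff mult.assoc)
lemma CL_1[simp]: "const_lmult 1 p = p"
  by (rule poly_eqI) (simp add: CL_coeff)
lemma CL_0S[simp]: "const_lmult 0 p = 0"
  by (rule poly_eqI) (simp add: CL_coeff)
lemma CL_0V[simp]: "const_lmult c 0 = 0"
  by (rule poly_eqI) (simp add: CL_coeff)
lemma CL_uminus: "const_lmult c (- p) = - const_lmult c p"
  by (rule poly_eqI) (simp add: CL_coeff)
lemma CL_diff: "const_lmult c (p - q) = const_lmult c p - const_lmult c q"
  by (rule poly_eqI) (simp add: CL_coeff algebra_simps)
lemma CL_sum: "const_lmult c (\<Sum>i\<in>A. f i) = (\<Sum>i\<in>A. const_lmult c (f i))"
  by (induction A rule: infinite_finite_induct) (auto simp: CL_add)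
lemma CL_sumS: "const_lmult (\<Sum>i\<in>A. f i) p = (\<Sum>i\<in>A. const_lmult (f i) p)"
  by (induction A rule: infinite_finite_induct) (auto simp: CL_addS)
lemma degree_CL: "degree (const_lmult c p) \<le> degree p"
  by (rule degree_le) (simp add: CL_coeff coeff_eq_0)
lemma CL_monom: "const_lmult c (monom d i) = monom (c * d) i"
  by (rule poly_eqI) (simp add: CL_coeff)
lemma CL_const: "const_lmult c [:d:] = [:c * d:]"
  by (rule poly_eqI) (simp add: CL_coeff coeff_pCons split: nat.split)

locale skewctx =
  fixes \<sigma> \<delta> :: "'a::division_ring \<Rightarrow> 'a"
  assumes aut: "is_automorphism \<sigma>" and der: "is_left_sigma_derivation \<sigma> \<delta>"
begin

abbreviation T where "T \<equiv> skew_tmult \<sigma> \<delta>"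
abbreviation M where "M \<equiv> skew_mult \<sigma> \<delta>"

lemma sig_add: "\<sigma> (a + b) = \<sigma> a + \<sigma> b" using aut by (simp add: is_automorphism_def)
lemma sig_mult: "\<sigma> (a * b) = \<sigma> a * \<sigma> b" using aut by (simp add: is_automorphism_def)
lemma sig_1[simp]: "\<sigma> 1 = 1" using aut by (simp add: is_automorphism_def)
lemma sig_bij: "bij \<sigma>" using aut by (simp add: is_automorphism_def)
lemma sig_0[simp]: "\<sigma> 0 = 0" using sig_add[of 0 0] by simp
lemma sig_neg: "\<sigma> (- a) = - \<sigma> a"
proof -
  have "\<sigma> a + \<sigma> (-a) = 0" using sig_add[of a "-a"] by simp
  then have "- \<sigma> a = \<sigma> (-a)" by (rule minus_unique)
  then show ?thesis by (rule sym)
qed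
lemma del_add: "\<delta> (a + b) = \<delta> a + \<delta> b" using der by (simp add: is_left_sigma_derivation_def)
lemma del_mult: "\<delta> (a * b) = \<sigma> a * \<delta> b + \<delta> a * b" using der by (simp add: is_left_sigma_derivation_def)
lemma del_0[simp]: "\<delta> 0 = 0" using del_add[of 0 0] by simp
lemma del_1[simp]: "\<delta> 1 = 0" using del_mult[of 1 1] by simp
lemma del_neg: "\<delta> (- a) = - \<delta> a"
proof -
  have "\<delta> a + \<delta> (-a) = 0" using del_add[of a "-a"] by simp
  then have "- \<delta> a = \<delta> (-a)" by (rule minus_unique)
  then show ?thesis by (rule sym)
qed

lemma sigpow_0[simp]: "(\<sigma> ^^ k) 0 = 0" by (induction k) auto
lemma sigpow_1[simp]: "(\<sigma> ^^ k) 1 = 1" by (induction k) auto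
lemma sigpow_eq0: "(\<sigma> ^^ k) x = 0 \<longleftrightarrow> x = 0"
proof -
  have "inj (\<sigma> ^^ k)" using sig_bij by (simp add: bij_is_inj)
  then show ?thesis by (metis injD sigpow_0)
qed

lemma T_coeff0: "coeff (T p) 0 = \<delta> (coeff p 0)"
  unfolding skew_tmult_def by (simp add: coeff_map_poly)
lemma T_coeffS: "coeff (T p) (Suc n) = \<sigma> (coeff p n) + \<delta> (coeff p (Suc n))"
  unfolding skew_tmult_def by (simp add: coeff_map_poly)

lemma T_add: "T (p + q) = T p + T q"
  by (rule poly_eqI, case_tac n) (simp_all add: T_coeff0 T_coeffS sig_add del_add algebra_simps)
lemma T_0[simp]: "T 0 = 0"
  by (rule poly_eqI, case_tac n) (simp_all add: T_coeff0 T_coeffS)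
lemma T_uminus: "T (- p) = - T p"
  by (rule poly_eqI, case_tac n) (simp_all add: T_coeff0 T_coeffS sig_neg del_neg)
lemma T_diff: "T (p - q) = T p - T q"
  using T_add[of p "-q"] T_uminus[of q] by simp
lemma T_sum: "T (\<Sum>i\<in>A. f i) = (\<Sum>i\<in>A. T (f i))"
  by (induction A rule: infinite_finite_induct) (auto simp: T_add)
lemma Tpow_add: "(T ^^ i) (p + q) = (T ^^ i) p + (T ^^ i) q"
  by (induction i) (auto simp: T_add)
lemma Tpow_0[simp]: "(T ^^ i) 0 = 0"
  by (induction i) auto
lemma T_CL: "T (const_lmult c p) = const_lmult (\<sigma> c) (T p) + const_lmult (\<delta> c) p"
  by (rule poly_eqI, case_tac n)
     (simp_all add: T_coeff0 T_coeffS CL_coeff sig_mult del_mult algebra_simps)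

lemma T_degree: "degree q \<le> n \<Longrightarrow> degree (T q) \<le> Suc n"
  apply (rule degree_le, intro allI impI)
  apply (case_tac i)
   apply (simp_all add: T_coeffS coeff_eq_0)
  done
lemma T_coeff_top: "degree q \<le> n \<Longrightarrow> coeff (T q) (Suc n) = \<sigma> (coeff q n)"
  by (simp add: T_coeffS coeff_eq_0)

lemma Tpow_degree: "degree ((T ^^ i) q) \<le> degree q + i"
  by (induction i) (auto intro: T_degree)
lemma Tpow_coeff_top: "coeff ((T ^^ i) q) (degree q + i) = (\<sigma> ^^ i) (lead_coeff q)"
  by (induction i) (auto simp: T_coeff_top Tpow_degree)

lemma M_alt: "degree p \<le> N \<Longrightarrow> M p q = (\<Sum>i\<le>N. const_lmult (coeff p i) ((T ^^ i) q))"
  unfolding skew_mult_def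
  by (rule sum.mono_neutral_left) (auto simp: coeff_eq_0)

lemma M_add_left: "M (p + q) r = M p r + M q r"
proof -
  define N where "N = max (degree p) (degree q)"
  have "degree (p + q) \<le> N" "degree p \<le> N" "degree q \<le> N"
    by (auto simp: N_def degree_add_le)
  then show ?thesis
    by (simp add: M_alt[of _ N] CL_addS sum.distrib)
qed
lemma M_0_left[simp]: "M 0 q = 0"
  using M_add_left[of 0 0 q] by simp
lemma M_uminus_left: "M (- p) q = - M p q"
proof -
  have "M p q + M (-p) q = 0" using M_add_left[of p "-p" q] by simp
  then have "- M p q = M (-p) q" by (rule minus_unique)
  then show ?thesis by (rule sym)
qed
lemma M_diff_left: "M (p - q) r = M p r - M q r"
  using M_add_left[of p "-q" r] M_uminus_left[of q r] by simp
lemma M_add_right: "M p (q + r) = M p q + M p r"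
  unfolding skew_mult_def by (simp add: Tpow_add CL_add sum.distrib)
lemma M_0_right[simp]: "M p 0 = 0"
  unfolding skew_mult_def by simp
lemma M_uminus_right: "M p (- q) = - M p q"
proof -
  have "M p q + M p (-q) = 0" using M_add_right[of p q "-q"] by simp
  then have "- M p q = M p (-q)" by (rule minus_unique)
  then show ?thesis by (rule sym)
qed
lemma M_diff_right: "M p (q - r) = M p q - M p r"
  using M_add_right[of p q "-r"] M_uminus_right[of p r] by simp
lemma M_sum_left: "M (\<Sum>x\<in>A. f x) r = (\<Sum>x\<in>A. M (f x) r)"
  by (induction A rule: infinite_finite_induct) (auto simp: M_add_left)
lemma M_sum_right: "M p (\<Sum>x\<in>A. f x) = (\<Sum>x\<in>A. M p (f x))"
  by (induction A rule: infinite_finite_induct) (auto simp: M_add_right)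

lemma M_CL_left: "M (const_lmult c p) q = const_lmult c (M p q)"
  using degree_CL[of c p]
  by (simp add: M_alt[of _ "degree p"] CL_coeff CL_mult CL_sum)

lemma M_T_left: "M (T p) q = T (M p q)"
proof -
  let ?n = "degree p"
  let ?C = "\<lambda>i. const_lmult (\<delta> (coeff p i)) ((T ^^ i) q)"
  have dT: "degree (T p) \<le> Suc ?n" by (rule T_degree) simp
  have "M (T p) q = (\<Sum>i\<le>Suc ?n. const_lmult (coeff (T p) i) ((T ^^ i) q))"
    by (rule M_alt[OF dT])
  also have "\<dots> = const_lmult (coeff (T p) 0) q + (\<Sum>i\<le>?n. const_lmult (coeff (T p) (Suc i)) ((T ^^ Suc i) q))"
    by (subst sum.atMost_Suc_shift) simp
  also have "\<dots> = ?C 0 + (\<Sum>i\<le>?n. const_lmult (\<sigma> (coeff p i)) (T ((T ^^ i) q)) + ?C (Suc i))"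
    by (simp add: T_coeff0 T_coeffS CL_addS)
  also have "\<dots> = (\<Sum>i\<le>?n. const_lmult (\<sigma> (coeff p i)) (T ((T ^^ i) q))) + (?C 0 + (\<Sum>i\<le>?n. ?C (Suc i)))"
    by (simp add: sum.distrib algebra_simps)
  also have "?C 0 + (\<Sum>i\<le>?n. ?C (Suc i)) = (\<Sum>i\<le>Suc ?n. ?C i)"
    by (subst sum.atMost_Suc_shift) simp
  also have "\<dots> = (\<Sum>i\<le>?n. ?C i)"
    by (simp add: coeff_eq_0)
  also have "(\<Sum>i\<le>?n. const_lmult (\<sigma> (coeff p i)) (T ((T ^^ i) q))) + (\<Sum>i\<le>?n. ?C i)
      = (\<Sum>i\<le>?n. T (const_lmult (coeff p i) ((T ^^ i) q)))"
    by (simp add: T_CL sum.distrib)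
  also have "\<dots> = T (M p q)"
    unfolding skew_mult_def T_sum ..
  finally show ?thesis .
qed

lemma M_Tpow_left: "M ((T ^^ i) p) q = (T ^^ i) (M p q)"
  by (induction i) (auto simp: M_T_left)

lemma M_assoc: "M (M p q) r = M p (M q r)"
proof -
  have "M (M p q) r = (\<Sum>i\<le>degree p. M (const_lmult (coeff p i) ((T ^^ i) q)) r)"
    unfolding skew_mult_def[of _ _ p q] M_sum_left ..
  also have "\<dots> = (\<Sum>i\<le>degree p. const_lmult (coeff p i) ((T ^^ i) (M q r)))"
    by (simp add: M_CL_left M_Tpow_left)
  also have "\<dots> = M p (M q r)" unfolding skew_mult_def ..
  finally show ?thesis .
qed

lemma M_const_left: "M [:c:] p = const_lmult c p"
  using M_alt[of "[:c:]" 0 p] by simp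
lemma M_one_left[simp]: "M [:1:] p = p"
  by (simp add: M_const_left)
lemma T_monom1: "T (monom 1 i) = monom 1 (Suc i)"
  by (rule poly_eqI, case_tac n) (auto simp: T_coeff0 T_coeffS)
lemma Tpow_one: "(T ^^ i) [:1:] = monom 1 i"
  by (induction i) (auto simp: T_monom1 one_pCons[symmetric] monom_0)
lemma M_one_right[simp]: "M p [:1:] = p"
  unfolding skew_mult_def Tpow_one CL_monom by (simp add: poly_as_sum_of_monoms)
lemma M_const_const: "M [:a:] [:b:] = [:a * b:]"
  by (simp add: M_const_left CL_const)
lemma M_monom_left: "M (monom c k) g = const_lmult c ((T ^^ k) g)"
proof -
  have "M (monom c k) g = (\<Sum>i\<le>k. const_lmult (coeff (monom c k) i) ((T ^^ i) g))"
    by (rule M_alt) (simp add: degree_monom_le)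
  also have "\<dots> = (\<Sum>i\<le>k. if i = k then const_lmult c ((T ^^ k) g) else 0)"
    by (rule sum.cong) auto
  also have "\<dots> = const_lmult c ((T ^^ k) g)" by simp
  finally show ?thesis .
qed

lemma M_degree_le: "degree (M p q) \<le> degree p + degree q"
proof (rule degree_le, intro allI impI)
  fix n assume n: "degree p + degree q < n"
  have "coeff (M p q) n = (\<Sum>i\<le>degree p. coeff p i * coeff ((T ^^ i) q) n)"
    unfolding skew_mult_def coeff_sum CL_coeff ..
  also have "\<dots> = 0"
  proof (rule sum.neutral, intro ballI)
    fix i assume "i \<in> {..degree p}"
    then have "degree ((T ^^ i) q) < n" using Tpow_degree[of i q] n by auto
    then show "coeff p i * coeff ((T ^^ i) q) n = 0" by (simp add: coeff_eq_0)
  qed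
  finally show "coeff (M p q) n = 0" .
qed

lemma M_coeff_top: "coeff (M p q) (degree p + degree q) = lead_coeff p * (\<sigma> ^^ degree p) (lead_coeff q)"
proof -
  let ?D = "degree p + degree q"
  have "coeff (M p q) ?D = (\<Sum>i\<le>degree p. coeff p i * coeff ((T ^^ i) q) ?D)"
    unfolding skew_mult_def coeff_sum CL_coeff ..
  also have "\<dots> = (\<Sum>i\<le>degree p. if i = degree p then lead_coeff p * (\<sigma> ^^ degree p) (lead_coeff q) else 0)"
  proof (rule sum.cong, simp)
    fix i assume "i \<in> {..degree p}"
    then have i: "i \<le> degree p" by simp
    show "coeff p i * coeff ((T ^^ i) q) ?D = (if i = degree p then lead_coeff p * (\<sigma> ^^ degree p) (lead_coeff q) else 0)"
    proof (cases "i = degree p")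
      case True
      then show ?thesis using Tpow_coeff_top[of i q] by (simp add: add.commute)
    next
      case False
      then have "degree ((T ^^ i) q) < ?D" using Tpow_degree[of i q] i by auto
      then show ?thesis using False by (simp add: coeff_eq_0)
    qed
  qed
  also have "\<dots> = lead_coeff p * (\<sigma> ^^ degree p) (lead_coeff q)" by simp
  finally show ?thesis .
qed

lemma M_degree:
  assumes "p \<noteq> 0" "q \<noteq> 0"
  shows "degree (M p q) = degree p + degree q" "M p q \<noteq> 0"
    "lead_coeff (M p q) = lead_coeff p * (\<sigma> ^^ degree p) (lead_coeff q)"
proof -
  have nz: "lead_coeff p * (\<sigma> ^^ degree p) (lead_coeff q) \<noteq> 0"
    using assms by (simp add: sigpow_eq0)
  then have "coeff (M p q) (degree p + degree q) \<noteq> 0" by (simp add: M_coeff_top)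
  then have "degree p + degree q \<le> degree (M p q)" by (rule le_degree)
  then show d: "degree (M p q) = degree p + degree q" using M_degree_le[of p q] by simp
  show "M p q \<noteq> 0" using \<open>coeff (M p q) _ \<noteq> 0\<close> by auto
  show "lead_coeff (M p q) = lead_coeff p * (\<sigma> ^^ degree p) (lead_coeff q)"
    using d by (simp add: M_coeff_top)
qed

lemma deg_diff_lt:
  fixes p h :: "'a poly"
  assumes "degree p = degree h" "lead_coeff p = lead_coeff h" "0 < degree p"
  shows "degree (p - h) < degree p"
proof -
  have le: "degree (p - h) \<le> degree p" using degree_diff_le_max[of p h] assms by simp
  have c: "coeff (p - h) (degree p) = 0" using assms by simp
  show ?thesis
  proof (rule ccontr)
    assume "\<not> ?thesis"
    then have "degree (p - h) = degree p" using le by simp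
    then have "p - h = 0" using c by (metis leading_coeff_0_iff)
    then show False using assms \<open>degree (p - h) = degree p\<close> by simp
  qed
qed

lemma division:
  assumes g1: "lead_coeff g = 1" and g0: "0 < degree g"
  shows "\<exists>q r. p = M q g + r \<and> degree r < degree g"
proof (induction "degree p" arbitrary: p rule: less_induct)
  case less
  show ?case
  proof (cases "degree p < degree g")
    case True
    then show ?thesis by (intro exI[of _ 0] exI[of _ p]) simp
  next
    case False
    define k where "k = degree p - degree g"
    define c where "c = lead_coeff p"
    have p0: "p \<noteq> 0" using False g0 by auto
    then have c0: "c \<noteq> 0" by (simp add: c_def)
    define h where "h = M (monom c k) g"
    have gnz: "g \<noteq> 0" using g0 by auto
    have dh: "degree h = degree p" "lead_coeff h = c"
      using M_degree[of "monom c k" g] c0 gnz False g1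
      by (auto simp: h_def degree_monom_eq k_def)
    have "degree (p - h) < degree p"
      using deg_diff_lt[of p h] dh False g0 by (simp add: c_def)
    then obtain q r where qr: "p - h = M q g + r" "degree r < degree g"
      using less by blast
    have "p = M (monom c k + q) g + r"
      using qr(1) by (simp add: M_add_left h_def[symmetric] algebra_simps)
    then show ?thesis using qr(2) by blast
  qed
qed

end

locale skewf = skewctx +
  fixes f :: "'a poly"
  assumes monic: "lead_coeff f = 1" and degf: "0 < degree f"
begin

abbreviation rem where "rem p \<equiv> skew_rem \<sigma> \<delta> p f"

lemma fnz: "f \<noteq> 0" using degf by auto

lemma rem_eq:
  assumes "p = M q f + r" "degree r < degree f"
  shows "rem p = r"
  unfolding skew_rem_def
proof (rule the_equality)
  show "degree r < degree f \<and> (\<exists>q. p = M q f + r)" using assms by blast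
next
  fix r' assume "degree r' < degree f \<and> (\<exists>q. p = M q f + r')"
  then obtain q' where q': "p = M q' f + r'" "degree r' < degree f" by blast
  have eq: "M (q - q') f = r' - r" using assms(1) q'(1) by (simp add: M_diff_left algebra_simps)
  show "r' = r"
  proof (cases "q = q'")
    case True then show ?thesis using eq by simp
  next
    case False
    then have "degree (M (q - q') f) = degree (q - q') + degree f" using M_degree fnz by simp
    moreover have "degree (r' - r) < degree f"
      using degree_diff_le_max[of r' r] assms(2) q'(2) by simp
    ultimately show ?thesis using eq by simp
  qed
qed

lemma rem_prop: "\<exists>q. p = M q f + rem p" "degree (rem p) < degree f"
proof -
  obtain q r where "p = M q f + r" "degree r < degree f" using division[OF monic degf] by blast
  then have "rem p = r" by (rule rem_eq)
  then show "\<exists>q. p = M q f + rem p" "degree (rem p) < degree f"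
    using \<open>p = _\<close> \<open>degree r < _\<close> by auto
qed

lemma rem_add: "rem (p + p') = rem p + rem p'"
proof -
  obtain q q' where "p = M q f + rem p" "p' = M q' f + rem p'" using rem_prop by metis
  then have "p + p' = (M q f + rem p) + (M q' f + rem p')" by (rule arg_cong2[where f="(+)"])
  also have "\<dots> = M (q + q') f + (rem p + rem p')" by (simp add: M_add_left algebra_simps)
  finally have "p + p' = M (q + q') f + (rem p + rem p')" .
  moreover have "degree (rem p + rem p') < degree f"
    using degree_add_le_max[of "rem p" "rem p'"] rem_prop(2)[of p] rem_prop(2)[of p'] by simp
  ultimately show ?thesis by (rule rem_eq)
qed

lemma rem_CL: "rem (const_lmult c p) = const_lmult c (rem p)"
proof -
  obtain q where "p = M q f + rem p" using rem_prop by metis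
  then have "const_lmult c p = M (const_lmult c q) f + const_lmult c (rem p)"
    by (metis CL_add M_CL_left)
  moreover have "degree (const_lmult c (rem p)) < degree f"
    using degree_CL[of c "rem p"] rem_prop(2)[of p] by simp
  ultimately show ?thesis by (rule rem_eq)
qed

lemma rem_small: "degree p < degree f \<Longrightarrow> rem p = p"
  using rem_eq[of p 0 p] by simp

lemma rem_Mf: "rem (M q f + r) = rem r"
  by (simp add: rem_add rem_eq[of "M q f" q 0] degf)

lemma rem_0[simp]: "rem 0 = 0"
  using rem_small[of 0] degf by simp

lemma rem_uminus: "rem (- p) = - rem p"
proof -
  have e: "const_lmult (-1) q = - q" for q :: "'a poly" by (rule poly_eqI) (simp add: CL_coeff)
  show ?thesis using rem_CL[of "-1" p] by (simp add: e)
qed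

lemma rem_diff: "rem (p - p') = rem p - rem p'"
  using rem_add[of p "- p'"] rem_uminus[of p'] by simp

lemma rem_sum: "rem (\<Sum>i\<in>A. g i) = (\<Sum>i\<in>A. rem (g i))"
  by (induction A rule: infinite_finite_induct) (auto simp: rem_add)

end

lemma dmod_left: "dmod (UNIV::'a::division_ring set) (*) (const_lmult :: 'a \<Rightarrow> 'a poly \<Rightarrow> 'a poly)"
  by unfold_locales (auto simp: CL_addS CL_add CL_mult algebra_simps)

lemma sum_monoms_lt: "degree (v::'a::division_ring poly) < n \<Longrightarrow> (\<Sum>i<n. const_lmult (coeff v i) (monom 1 i)) = v"
  by (rule poly_eqI) (auto simp: coeff_sum CL_monom coeff_eq_0 if_distrib[where f="\<lambda>x. x * a" for a] cong: if_cong)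

context skewctx
begin

lemma min_exists:
  assumes "x \<in> I" "x \<noteq> 0"
  shows "\<exists>g. g \<in> I \<and> g \<noteq> 0 \<and> (\<forall>h\<in>I. h \<noteq> 0 \<longrightarrow> degree g \<le> degree h)"
  using ex_has_least_nat[of "\<lambda>h. h \<in> I \<and> h \<noteq> 0" x degree] assms by blast

lemma min_gen:
  assumes sub: "\<forall>x\<in>I. \<forall>y\<in>I. x - y \<in> I" and lm: "\<forall>s. \<forall>x\<in>I. M s x \<in> I"
    and gI: "g \<in> I" "g \<noteq> 0" and gmin: "\<forall>h\<in>I. h \<noteq> 0 \<longrightarrow> degree g \<le> degree h"
  shows "(degree g = 0 \<and> [:1:] \<in> I) \<or>
     (0 < degree g \<and> (\<exists>g'. g' \<in> I \<and> lead_coeff g' = 1 \<and> degree g' = degree g \<and> (\<forall>h\<in>I. \<exists>s. h = M s g')))"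
proof -
  define c where "c = lead_coeff g"
  have c0: "c \<noteq> 0" using gI by (simp add: c_def)
  define g' where "g' = M [:inverse c:] g"
  have g'I: "g' \<in> I" using lm gI by (simp add: g'_def)
  have dg': "degree g' = degree g" "lead_coeff g' = 1"
    using M_degree[of "[:inverse c:]" g] c0 gI by (auto simp: g'_def c_def)
  show ?thesis
  proof (cases "degree g = 0")
    case True
    then have "degree g' = 0" using dg' by simp
    then obtain a where "g' = [:a:]" by (rule degree_eq_zeroE)
    then have "g' = [:1:]" using dg' by simp
    then show ?thesis using True g'I by simp
  next
    case False
    have "\<forall>h\<in>I. \<exists>s. h = M s g'"
    proof
      fix h assume hI: "h \<in> I"
      obtain s r where sr: "h = M s g' + r" "degree r < degree g'"
        using division[of g' h] dg' False by auto
      have "r = h - M s g'" using sr by simp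
      then have "r \<in> I" using sub lm hI g'I by simp
      have "r = 0"
      proof (rule ccontr)
        assume "r \<noteq> 0"
        then have "degree g \<le> degree r" using gmin \<open>r \<in> I\<close> by blast
        then show False using sr(2) dg' by simp
      qed
      then show "\<exists>s. h = M s g'" using sr by auto
    qed
    then show ?thesis using False g'I dg' by blast
  qed
qed

end

context skewf
begin

lemma no_zero_div:
  assumes irr: "\<forall>g h. f = M g h \<longrightarrow> \<not> (degree g < degree f \<and> degree h < degree f)"
    and a: "degree a < degree f" "a \<noteq> 0" and b: "degree b < degree f" "b \<noteq> 0"
  shows "rem (M a b) \<noteq> 0"
proof
  assume ab0: "rem (M a b) = 0"
  \<comment> \<open>Step 1: the left ideal generated by b and f is everything\<close>
  define L where "L = {p. \<exists>x y. p = M x b + M y f}"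
  have Lsub: "\<forall>x\<in>L. \<forall>y\<in>L. x - y \<in> L"
  proof (intro ballI)
    fix p p' assume "p \<in> L" "p' \<in> L"
    then obtain x y x' y' where "p = M x b + M y f" "p' = M x' b + M y' f" unfolding L_def by blast
    then have "p - p' = M (x - x') b + M (y - y') f" by (simp add: M_diff_left algebra_simps)
    then show "p - p' \<in> L" unfolding L_def by blast
  qed
  have Llm: "\<forall>s. \<forall>x\<in>L. M s x \<in> L"
  proof (intro allI ballI)
    fix s p assume "p \<in> L"
    then obtain x y where "p = M x b + M y f" unfolding L_def by blast
    then have "M s p = M (M s x) b + M (M s y) f" by (simp add: M_add_right M_assoc)
    then show "M s p \<in> L" unfolding L_def by blast
  qed
  have bL: "b \<in> L" unfolding L_def by (intro CollectI exI[of _ "[:1:]"] exI[of _ 0]) simp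
  have fL: "f \<in> L" unfolding L_def by (intro CollectI exI[of _ 0] exI[of _ "[:1:]"]) simp
  obtain g where g: "g \<in> L" "g \<noteq> 0" "\<forall>h\<in>L. h \<noteq> 0 \<longrightarrow> degree g \<le> degree h"
    using min_exists[OF bL b(2)] by blast
  have "[:1:] \<in> L"
  proof -
    { assume "0 < degree g"
      then obtain g' where g': "g' \<in> L" "lead_coeff g' = 1" "degree g' = degree g" "\<forall>h\<in>L. \<exists>s. h = M s g'"
        using min_gen[OF Lsub Llm g] by auto
      obtain h where h: "f = M h g'" using g'(4) fL by blast
      obtain k where k: "b = M k g'" using g'(4) bL by blast
      have g'0: "g' \<noteq> 0" using g'(2) by auto
      have "k \<noteq> 0" using k b(2) by auto
      then have "degree b = degree k + degree g'" using k M_degree[OF _ g'0] by simp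
      then have d1: "degree g' < degree f" using b(1) by simp
      have "h \<noteq> 0" using h fnz by auto
      then have "degree f = degree h + degree g'" using h M_degree[OF _ g'0] by simp
      then have "degree h < degree f" using g'(3) \<open>0 < degree g\<close> by simp
      then have False using irr h d1 by blast }
    then show ?thesis using min_gen[OF Lsub Llm g] by auto
  qed
  then obtain u v where uv: "[:1:] = M u b + M v f" unfolding L_def by blast
  define J where "J = {r. \<exists>q. M r b = M q f}"
  have Jsub: "\<forall>x\<in>J. \<forall>y\<in>J. x - y \<in> J"
  proof (intro ballI)
    fix r r' assume "r \<in> J" "r' \<in> J"
    then obtain q q' where "M r b = M q f" "M r' b = M q' f" unfolding J_def by blast
    then have "M (r - r') b = M (q - q') f" by (simp add: M_diff_left)
    then show "r - r' \<in> J" unfolding J_def by blast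
  qed
  have Jlm: "\<forall>s. \<forall>x\<in>J. M s x \<in> J"
  proof (intro allI ballI)
    fix s r assume "r \<in> J"
    then obtain q where "M r b = M q f" unfolding J_def by blast
    then have "M (M s r) b = M (M s q) f" by (simp add: M_assoc)
    then show "M s r \<in> J" unfolding J_def by blast
  qed
  have aJ: "a \<in> J"
  proof -
    obtain q where "M a b = M q f + rem (M a b)" using rem_prop by blast
    then show ?thesis using ab0 unfolding J_def by auto
  qed
  obtain g where g: "g \<in> J" "g \<noteq> 0" "\<forall>h\<in>J. h \<noteq> 0 \<longrightarrow> degree g \<le> degree h"
    using min_exists[OF aJ a(2)] by blast
  have dga: "degree g \<le> degree a" using g(3) aJ a(2) by blast
  have "\<not> (degree g = 0 \<and> [:1:] \<in> J)"
  proof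
    assume "degree g = 0 \<and> [:1:] \<in> J"
    then obtain q where "b = M q f" unfolding J_def by auto
    moreover have "q \<noteq> 0" using b(2) \<open>b = M q f\<close> by auto
    ultimately have "degree b = degree q + degree f" using M_degree fnz by simp
    then show False using b(1) by simp
  qed
  then obtain g' where g': "0 < degree g" "g' \<in> J" "lead_coeff g' = 1" "degree g' = degree g" "\<forall>h\<in>J. \<exists>s. h = M s g'"
    using min_gen[OF Jsub Jlm g] by blast
  define d where "d = degree g"
  have d: "0 < d" "d < degree f" using g'(1) dga a(1) by (auto simp: d_def)
  obtain q0 where q0: "M g' b = M q0 f" using g'(2) unfolding J_def by blast
  \<comment> \<open>Step 3: S_f is spanned by d elements as a left D-module\<close>
  let ?u = "\<lambda>j. rem ((T ^^ j) b)"
  have span: "z \<in> dmod.span UNIV const_lmult {..<d} ?u" if z: "degree z < degree f" for z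
  proof -
    have dg'0: "0 < degree g'" using g'(1,4) by simp
    obtain s r' where sr: "M z u = M s g' + r'" "degree r' < degree g'"
      using division[OF g'(3) dg'0, of "M z u"] by blast
    define X where "X = M s q0 + M z v"
    have "z = M z [:1:]" by simp
    also have "\<dots> = M z (M u b + M v f)" by (simp only: uv)
    also have "\<dots> = M (M z u) b + M (M z v) f" by (simp only: M_add_right M_assoc)
    also have "M (M z u) b = M (M s q0) f + M r' b"
      by (simp only: sr(1) M_add_left M_assoc q0)
    finally have zeq: "z = M X f + M r' b" unfolding X_def by (simp add: M_add_left algebra_simps)
    have "rem z = rem (M X f + M r' b)" using zeq by (rule arg_cong)
    then have "z = rem (M r' b)" using rem_Mf rem_small[OF z] by simp
    also have "M r' b = (\<Sum>j\<le>d - 1. const_lmult (coeff r' j) ((T ^^ j) b))"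
      by (rule M_alt) (use sr(2) g'(4) d in \<open>simp add: d_def\<close>)
    also have "{..d - 1} = {..<d}" using d(1) by auto
    finally have "z = (\<Sum>j<d. const_lmult (coeff r' j) (?u j))" by (simp only: rem_sum rem_CL)
    then show ?thesis unfolding dmod.span_def[OF dmod_left] by blast
  qed
  have "finite {..<degree f} \<and> card {..<d} < card {..<degree f} \<and>
      (\<forall>j\<in>{..<degree f}. monom 1 j \<in> dmod.span UNIV const_lmult {..<d} ?u)"
    using d by (auto intro!: span simp: degree_monom_eq)
  from dmod.steinitz[OF dmod_left finite_lessThan[of d], where u="\<lambda>j. rem ((T ^^ j) b)", rule_format, of "{..<degree f}" "\<lambda>j. monom 1 j", OF this]
  obtain c :: "nat \<Rightarrow> 'a" where c: "\<exists>j\<in>{..<degree f}. c j \<noteq> 0"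
      "(\<Sum>j\<in>{..<degree f}. const_lmult (c j) (monom 1 j)) = 0"
    by blast
  then obtain j where j: "j < degree f" "c j \<noteq> 0" by auto
  have "coeff (\<Sum>j\<in>{..<degree f}. const_lmult (c j) (monom 1 j)) j = c j"
    using j by (simp add: coeff_sum CL_monom)
  then show False using c(2) j(2) by simp
qed

end

lemma bij_lemma:
  fixes L :: "'v::ab_group_add \<Rightarrow> 'v"
  assumes LV: "\<forall>x\<in>V. L x \<in> V" and Vdiff: "\<forall>x\<in>V. \<forall>y\<in>V. x - y \<in> V"
    and Ldiff: "\<forall>x\<in>V. \<forall>y\<in>V. L (x - y) = L x - L y"
    and inj0: "\<forall>x\<in>V. L x = 0 \<longrightarrow> x = 0" and surj: "\<forall>w\<in>V. \<exists>x\<in>V. L x = w"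
  shows "bij_betw L V V"
  unfolding bij_betw_def
proof
  show "inj_on L V"
  proof (rule inj_onI)
    fix x y assume "x \<in> V" "y \<in> V" "L x = L y"
    then have "L (x - y) = 0" using Ldiff by simp
    then have "x - y = 0" using inj0 Vdiff \<open>x \<in> V\<close> \<open>y \<in> V\<close> by blast
    then show "x = y" by simp
  qed
  show "L ` V = V"
  proof
    show "L ` V \<subseteq> V" using LV by blast
    show "V \<subseteq> L ` V"
    proof
      fix w assume "w \<in> V"
      then obtain x where "x \<in> V" "L x = w" using surj by blast
      then show "w \<in> L ` V" by (metis image_eqI)
    qed
  qed
qed

lemma const_sum: "[:\<Sum>x\<in>A. g x:] = (\<Sum>x\<in>A. [:g x:])"
  by (rule poly_eqI) (auto simp: coeff_sum coeff_pCons split: nat.split)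

context skewctx
begin

lemma dmod_right:
  assumes B1: "1 \<in> B" and Badd: "\<forall>x\<in>B. \<forall>y\<in>B. x + y \<in> B" and Bmul: "\<forall>x\<in>B. \<forall>y\<in>B. x * y \<in> B"
    and Bneg: "\<forall>x\<in>B. - x \<in> B" and Binv: "\<forall>x\<in>B. x \<noteq> 0 \<longrightarrow> inverse x \<in> B"
  shows "dmod B (\<lambda>c d. d * c) (\<lambda>c v. M v [:c:])"
proof unfold_locales
  show "0 \<in> B" using Badd B1 Bneg by (metis add.right_inverse)
next
  fix c d v
  show "M v [:c + d:] = M v [:c:] + M v [:d:]"
    using M_add_right[of v "[:c:]" "[:d:]"] by simp
  show "M v [:d * c:] = M (M v [:d:]) [:c:]"
    by (simp add: M_assoc M_const_const)
qed (use assms in \<open>auto simp: algebra_simps M_add_left\<close>)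

lemma Tpow_sum: "(T ^^ i) (\<Sum>x\<in>A. g x) = (\<Sum>x\<in>A. (T ^^ i) (g x))"
  by (induction A rule: infinite_finite_induct) (auto simp: Tpow_add)

lemma tsum_repr: "degree v \<le> N \<Longrightarrow> \<exists>dd. v = (\<Sum>i\<le>N. (T ^^ i) [:dd i:])"
proof (induction N arbitrary: v)
  case 0
  then have "degree v = 0" by simp
  then obtain a where "v = [:a:]" by (rule degree_eq_zeroE)
  then show ?case by (intro exI[of _ "\<lambda>_. a"]) simp
next
  case (Suc N)
  have "surj (\<sigma> ^^ Suc N)" by (rule surj_fn) (rule bij_is_surj[OF sig_bij])
  from surjD[OF this, of "coeff v (Suc N)"] obtain c where c0: "coeff v (Suc N) = (\<sigma> ^^ Suc N) c" by blast
  then have c: "(\<sigma> ^^ Suc N) c = coeff v (Suc N)" by simp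
  define v' where "v' = v - (T ^^ Suc N) [:c:]"
  have dT: "degree ((T ^^ Suc N) [:c:]) \<le> Suc N" using Tpow_degree[of "Suc N" "[:c:]"] by simp
  have cT: "coeff ((T ^^ Suc N) [:c:]) (Suc N) = (\<sigma> ^^ Suc N) c"
    using Tpow_coeff_top[of "Suc N" "[:c:]"] by simp
  have "degree v' \<le> N"
  proof (rule degree_le, intro allI impI)
    fix i assume "N < i"
    then consider "i = Suc N" | "Suc N < i" by linarith
    then show "coeff v' i = 0"
    proof cases
      case 1 then show ?thesis using c cT by (simp add: v'_def)
    next
      case 2 then show ?thesis using dT Suc.prems by (simp add: v'_def coeff_eq_0)
    qed
  qed
  then obtain dd where dd: "v' = (\<Sum>i\<le>N. (T ^^ i) [:dd i:])" using Suc.IH by blast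
  have "v = v' + (T ^^ Suc N) [:c:]" by (simp add: v'_def)
  also have "\<dots> = (\<Sum>i\<le>N. (T ^^ i) [:(dd(Suc N := c)) i:]) + (T ^^ Suc N) [:(dd(Suc N := c)) (Suc N):]"
  proof -
    have "(\<Sum>i\<le>N. (T ^^ i) [:(dd(Suc N := c)) i:]) = (\<Sum>i\<le>N. (T ^^ i) [:dd i:])"
      by (rule sum.cong) auto
    then show ?thesis unfolding dd by simp
  qed
  also have "\<dots> = (\<Sum>i\<le>Suc N. (T ^^ i) [:(dd(Suc N := c)) i:])" by simp
  finally show ?case by blast
qed

end

context skewf
begin

lemma div_alg:
  assumes irr: "\<forall>g h. f = M g h \<longrightarrow> \<not> (degree g < degree f \<and> degree h < degree f)"
    and B1: "1 \<in> B" and Badd: "\<forall>x\<in>B. \<forall>y\<in>B. x + y \<in> B" and Bmul: "\<forall>x\<in>B. \<forall>y\<in>B. x * y \<in> B"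
    and Bneg: "\<forall>x\<in>B. - x \<in> B"
    and nuc: "\<forall>b\<in>B. [:b:] \<in> Nuc_r \<sigma> \<delta> f" and free: "free_finite_right_module B"
  shows "Sf_division_algebra \<sigma> \<delta> f"
proof -
  have B0: "0 \<in> B" using Badd B1 Bneg by (metis add.right_inverse)
  obtain n and e :: "nat \<Rightarrow> 'a" where H: "\<forall>d. \<exists>!\<beta>. (\<forall>i<n. \<beta> i \<in> B) \<and> (\<forall>i\<ge>n. \<beta> i = 0) \<and> d = (\<Sum>i<n. e i * \<beta> i)"
    using free unfolding free_finite_right_module_def by blast
  have n0: "0 < n"
  proof (rule ccontr)
    assume "\<not> 0 < n"
    then have "n = 0" by simp
    then show False using H[rule_format, of 1] by auto
  qed
  have Binv: "\<forall>x\<in>B. x \<noteq> 0 \<longrightarrow> inverse x \<in> B"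
  proof (intro ballI impI)
    fix b assume bB: "b \<in> B" and b0: "b \<noteq> 0"
    obtain \<gamma> where \<gamma>: "\<forall>i<n. \<gamma> i \<in> B" "\<forall>i\<ge>n. \<gamma> i = 0" "e 0 * inverse b = (\<Sum>i<n. e i * \<gamma> i)"
      using ex1_implies_ex[OF spec[OF H, of "e 0 * inverse b"]] by blast
    define P where "P \<beta> \<longleftrightarrow> (\<forall>i<n. \<beta> i \<in> B) \<and> (\<forall>i\<ge>n. \<beta> i = 0) \<and> e 0 = (\<Sum>i<n. e i * \<beta> i)" for \<beta>
    have uniq: "\<exists>!\<beta>. P \<beta>" unfolding P_def by (rule spec[OF H])
    have P1: "P (\<lambda>i. \<gamma> i * b)"
    proof -
      have "(\<Sum>i<n. e i * (\<gamma> i * b)) = (\<Sum>i<n. e i * \<gamma> i) * b"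
        by (simp add: sum_distrib_right mult.assoc)
      also have "\<dots> = e 0" using \<gamma>(3)[symmetric] b0 by (simp add: mult.assoc)
      finally show ?thesis unfolding P_def using \<gamma> bB Bmul by auto
    qed
    have P2: "P (\<lambda>i. if i = 0 then 1 else 0)"
    proof -
      have "(\<Sum>i<n. e i * (if i = 0 then 1 else 0)) = (\<Sum>i<n. if i = 0 then e 0 else 0)"
        by (rule sum.cong) auto
      also have "\<dots> = e 0" using n0 by simp
      finally show ?thesis unfolding P_def using B0 B1 n0 by auto
    qed
    have "(\<lambda>i. \<gamma> i * b) = (\<lambda>i. if i = 0 then 1 else 0)"
    proof -
      obtain z where z: "P z" "\<forall>y. P y \<longrightarrow> y = z" using uniq by blast
      have "(\<lambda>i. \<gamma> i * b) = z" by (rule z(2)[rule_format, OF P1])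
      moreover have "(\<lambda>i. if i = 0 then 1 else 0) = z" by (rule z(2)[rule_format, OF P2])
      ultimately show ?thesis by simp
    qed
    from fun_cong[OF this, of 0] have g0: "\<gamma> 0 * b = 1" by simp
    have "\<gamma> 0 = \<gamma> 0 * (b * inverse b)" using b0 by simp
    also have "\<dots> = inverse b" by (simp only: mult.assoc[symmetric] g0 mult_1_left)
    finally have "\<gamma> 0 = inverse b" .
    moreover have "\<gamma> 0 \<in> B" using \<gamma>(1) n0 by blast
    ultimately show "inverse b \<in> B" by simp
  qed
  interpret R: dmod B "\<lambda>c d. d * c" "\<lambda>c v. M v [:c:]"
    by (rule dmod_right[OF B1 Badd Bmul Bneg Binv])
  interpret Lm: dmod "UNIV::'a set" "(*)" const_lmult by (rule dmod_left)
  define V where "V = Sf f"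
  have V_iff: "x \<in> V \<longleftrightarrow> degree x < degree f" for x by (simp add: V_def Sf_def)
  have V0: "0 \<in> V" using degf by (simp add: V_iff)
  have Vadd: "\<forall>x\<in>V. \<forall>y\<in>V. x + y \<in> V"
  proof (intro ballI)
    fix x y assume "x \<in> V" "y \<in> V"
    then show "x + y \<in> V" using degree_add_le_max[of x y] by (simp add: V_iff)
  qed
  have Vdiff: "\<forall>x\<in>V. \<forall>y\<in>V. x - y \<in> V"
  proof (intro ballI)
    fix x y assume "x \<in> V" "y \<in> V"
    then show "x - y \<in> V" using degree_diff_le_max[of x y] by (simp add: V_iff)
  qed
  have Mc_deg: "degree (M x [:c:]) \<le> degree x" for x c
    using M_degree_le[of x "[:c:]"] by simp
  have VactR: "\<forall>c\<in>B. \<forall>x\<in>V. M x [:c:] \<in> V"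
  proof (intro ballI)
    fix c x assume "x \<in> V"
    then show "M x [:c:] \<in> V" using Mc_deg[of x c] by (simp add: V_iff)
  qed
  have VactL: "\<forall>c\<in>UNIV. \<forall>x\<in>V. const_lmult c x \<in> V"
  proof (intro ballI)
    fix c x assume "x \<in> V"
    then show "const_lmult c x \<in> V" using degree_CL[of c x] by (simp add: V_iff)
  qed
  have remV: "rem x \<in> V" for x using rem_prop(2) by (simp add: V_iff)
  define I where "I = {..<degree f} \<times> {..<n}"
  define u where "u = (\<lambda>(i, j). (T ^^ i) [:e j:])"
  have uV: "\<forall>p\<in>I. u p \<in> V"
  proof
    fix p assume "p \<in> I"
    then obtain i j where p: "p = (i, j)" "i < degree f" by (auto simp: I_def)
    have "degree ((T ^^ i) [:e j:]) \<le> i" using Tpow_degree[of i "[:e j:]"] by simp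
    then show "u p \<in> V" using p by (simp add: u_def V_iff)
  qed
  have Vspan: "V \<subseteq> R.span I u"
  proof
    fix v assume "v \<in> V"
    then have "degree v \<le> degree f - 1" by (simp add: V_iff)
    then obtain dd where dd: "v = (\<Sum>i\<le>degree f - 1. (T ^^ i) [:dd i:])" using tsum_repr by blast
    have "{..degree f - 1} = {..<degree f}" using degf by auto
    then have dd': "v = (\<Sum>i<degree f. (T ^^ i) [:dd i:])" using dd by simp
    have "\<forall>i. \<exists>\<beta>. (\<forall>j<n. \<beta> j \<in> B) \<and> dd i = (\<Sum>j<n. e j * \<beta> j)"
    proof
      fix i
      show "\<exists>\<beta>. (\<forall>j<n. \<beta> j \<in> B) \<and> dd i = (\<Sum>j<n. e j * \<beta> j)"
        using ex1_implies_ex[OF spec[OF H, of "dd i"]] by blast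
    qed
    from choice[OF this] obtain \<beta> where \<beta>0: "\<forall>i. (\<forall>j<n. \<beta> i j \<in> B) \<and> dd i = (\<Sum>j<n. e j * \<beta> i j)"
      by blast
    then have \<beta>: "\<And>i. (\<forall>j<n. \<beta> i j \<in> B) \<and> dd i = (\<Sum>j<n. e j * \<beta> i j)" by blast
    have "v = (\<Sum>i<degree f. \<Sum>j<n. M (u (i, j)) [:\<beta> i j:])"
    proof -
      have "(T ^^ i) [:dd i:] = (\<Sum>j<n. M (u (i, j)) [:\<beta> i j:])" for i
      proof -
        have "(T ^^ i) [:dd i:] = (\<Sum>j<n. (T ^^ i) [:e j * \<beta> i j:])"
          using \<beta>[of i] by (simp add: const_sum Tpow_sum)
        also have "\<dots> = (\<Sum>j<n. M (u (i, j)) [:\<beta> i j:])"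
          by (simp add: u_def M_Tpow_left M_const_const)
        finally show ?thesis .
      qed
      then show ?thesis using dd' by simp
    qed
    also have "\<dots> = (\<Sum>p\<in>I. M (u p) [:(case_prod \<beta>) p:])"
      unfolding I_def sum.cartesian_product by (rule sum.cong) auto
    finally show "v \<in> R.span I u"
      unfolding R.span_def using \<beta> by (auto simp: I_def intro!: exI[of _ "case_prod \<beta>"])
  qed
  have finI: "finite I" by (simp add: I_def)
  have VspanL: "V \<subseteq> Lm.span {..<degree f} (\<lambda>i. monom 1 i)"
  proof
    fix v assume "v \<in> V"
    then have "v = (\<Sum>i<degree f. const_lmult (coeff v i) (monom 1 i))"
      by (simp add: V_iff sum_monoms_lt)
    then show "v \<in> Lm.span {..<degree f} (\<lambda>i. monom 1 i)" unfolding Lm.span_def by blast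
  qed
  have uVL: "\<forall>i\<in>{..<degree f}. monom 1 i \<in> V" by (auto simp: V_iff degree_monom_eq)
  show ?thesis
    unfolding Sf_division_algebra_def V_def[symmetric]
  proof (intro ballI impI conjI)
    fix a assume aV: "a \<in> V" and a0: "a \<noteq> 0"
    let ?L = "\<lambda>x. Sf_mult \<sigma> \<delta> f a x"
    have Leq: "?L x = rem (M a x)" for x by (simp add: Sf_mult_def)
    have LV: "\<forall>x\<in>V. ?L x \<in> V" using remV Leq by simp
    have Ladd: "\<forall>x\<in>V. \<forall>y\<in>V. ?L (x + y) = ?L x + ?L y" by (simp add: Leq M_add_right rem_add)
    have Ldiff: "\<forall>x\<in>V. \<forall>y\<in>V. ?L (x - y) = ?L x - ?L y" by (simp add: Leq M_diff_right rem_diff)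
    have Linj: "\<forall>x\<in>V. ?L x = 0 \<longrightarrow> x = 0"
    proof (intro ballI impI)
      fix x assume xV: "x \<in> V" and Lx: "?L x = 0"
      show "x = 0"
      proof (rule ccontr)
        assume "x \<noteq> 0"
        then have "rem (M a x) \<noteq> 0" using no_zero_div[OF irr, of a x] aV a0 xV by (simp add: V_iff)
        then show False using Lx Leq by simp
      qed
    qed
    have Lact: "\<forall>c\<in>B. \<forall>x\<in>V. ?L (M x [:c:]) = M (?L x) [:c:]"
    proof (intro ballI)
      fix c x assume cB: "c \<in> B" and xV: "x \<in> V"
      have "[:c:] \<in> Nuc_r \<sigma> \<delta> f" using nuc cB by blast
      then have N0: "\<forall>y\<in>Sf f. \<forall>z\<in>Sf f. Sf_mult \<sigma> \<delta> f (Sf_mult \<sigma> \<delta> f y z) [:c:] = Sf_mult \<sigma> \<delta> f y (Sf_mult \<sigma> \<delta> f z [:c:])"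
        unfolding Nuc_r_def mem_Collect_eq by (rule conjunct2)
      have aS: "a \<in> Sf f" and xS: "x \<in> Sf f" using aV xV by (simp_all add: V_def)
      have N: "Sf_mult \<sigma> \<delta> f (Sf_mult \<sigma> \<delta> f a x) [:c:] = Sf_mult \<sigma> \<delta> f a (Sf_mult \<sigma> \<delta> f x [:c:])"
        using N0 aS xS by blast
      have small: "Sf_mult \<sigma> \<delta> f y [:c:] = M y [:c:]" if yV: "y \<in> V" for y
      proof -
        have "M y [:c:] \<in> V" using VactR cB yV by blast
        then have "degree (M y [:c:]) < degree f" by (simp add: V_iff)
        then show ?thesis unfolding Sf_mult_def by (rule rem_small)
      qed
      have LxV: "?L x \<in> V" using LV xV by blast
      have "?L (M x [:c:]) = Sf_mult \<sigma> \<delta> f a (Sf_mult \<sigma> \<delta> f x [:c:])" using small[OF xV] by simp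
      also have "\<dots> = Sf_mult \<sigma> \<delta> f (?L x) [:c:]" using N by simp
      also have "\<dots> = M (?L x) [:c:]" by (rule small[OF LxV])
      finally show "?L (M x [:c:]) = M (?L x) [:c:]" .
    qed
    have "\<forall>w\<in>V. \<exists>x\<in>V. ?L x = w"
      by (rule R.inj_imp_surj[OF finI uV Vspan Vadd VactR V0 LV Ladd Lact Linj])
    then show "bij_betw ?L V V" by (rule bij_lemma[OF LV Vdiff Ldiff Linj])
  next
    fix a assume aV: "a \<in> V" and a0: "a \<noteq> 0"
    let ?L = "\<lambda>x. Sf_mult \<sigma> \<delta> f x a"
    have Leq: "?L x = rem (M x a)" for x by (simp add: Sf_mult_def)
    have LV: "\<forall>x\<in>V. ?L x \<in> V" using remV Leq by simp
    have Ladd: "\<forall>x\<in>V. \<forall>y\<in>V. ?L (x + y) = ?L x + ?L y" by (simp add: Leq M_add_left rem_add)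
    have Ldiff: "\<forall>x\<in>V. \<forall>y\<in>V. ?L (x - y) = ?L x - ?L y" by (simp add: Leq M_diff_left rem_diff)
    have Linj: "\<forall>x\<in>V. ?L x = 0 \<longrightarrow> x = 0"
    proof (intro ballI impI)
      fix x assume xV: "x \<in> V" and Lx: "?L x = 0"
      show "x = 0"
      proof (rule ccontr)
        assume "x \<noteq> 0"
        then have "rem (M x a) \<noteq> 0" using no_zero_div[OF irr, of x a] aV a0 xV by (simp add: V_iff)
        then show False using Lx Leq by simp
      qed
    qed
    have Lact: "\<forall>c\<in>UNIV. \<forall>x\<in>V. ?L (const_lmult c x) = const_lmult c (?L x)"
      by (simp add: Leq M_CL_left rem_CL)
    have "\<forall>w\<in>V. \<exists>x\<in>V. ?L x = w"
      by (rule Lm.inj_imp_surj[OF finite_lessThan uVL VspanL Vadd VactL V0 LV Ladd Lact Linj])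
    then show "bij_betw ?L V V" by (rule bij_lemma[OF LV Vdiff Ldiff Linj])
  qed
qed

end

theorem mainTheorem11:
  fixes \<sigma> \<delta> :: "'a::division_ring \<Rightarrow> 'a" and f :: "'a poly" and m :: nat
  assumes "is_automorphism \<sigma>"
    and "is_left_sigma_derivation \<sigma> \<delta>"
    and "lead_coeff f = 1" and "degree f = m" and "m \<ge> 2"
    and "skew_irreducible \<sigma> \<delta> f"
  shows "((\<forall>a. [:a:] \<in> Nuc_r \<sigma> \<delta> f) \<longrightarrow> Sf_division_algebra \<sigma> \<delta> f)
       \<and> (\<forall>B. is_subalgebra \<sigma> \<delta> B \<and> (\<forall>b\<in>B. [:b:] \<in> Nuc_r \<sigma> \<delta> f)
              \<and> free_finite_right_module B \<longrightarrow> Sf_division_algebra \<sigma> \<delta> f)"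
proof -
  interpret skewf \<sigma> \<delta> f
    by unfold_locales (use assms in auto)
  have irr: "\<forall>g h. f = skew_mult \<sigma> \<delta> g h \<longrightarrow> \<not> (degree g < degree f \<and> degree h < degree f)"
    using assms(6) unfolding skew_irreducible_def by blast
  have part2: "\<forall>B. is_subalgebra \<sigma> \<delta> B \<and> (\<forall>b\<in>B. [:b:] \<in> Nuc_r \<sigma> \<delta> f)
              \<and> free_finite_right_module B \<longrightarrow> Sf_division_algebra \<sigma> \<delta> f"
  proof (intro allI impI)
    fix B assume H: "is_subalgebra \<sigma> \<delta> B \<and> (\<forall>b\<in>B. [:b:] \<in> Nuc_r \<sigma> \<delta> f) \<and> free_finite_right_module B"
    then have "1 \<in> B" "\<forall>x\<in>B. \<forall>y\<in>B. x + y \<in> B" "\<forall>x\<in>B. \<forall>y\<in>B. x * y \<in> B" "\<forall>x\<in>B. - x \<in> B"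
      unfolding is_subalgebra_def by auto
    then show "Sf_division_algebra \<sigma> \<delta> f"
      using div_alg[OF irr] H by blast
  qed
  have free: "free_finite_right_module (UNIV :: 'a set)"
    unfolding free_finite_right_module_def
    apply (rule exI[of _ 1], rule exI[of _ "\<lambda>_. 1"], rule allI)
    subgoal for d
      apply (rule ex1I[where a="\<lambda>i::nat. if i = 0 then d else 0"])
       apply simp
      apply (rule ext)
      subgoal for \<beta> i by (cases "i = 0") auto
      done
    done
  have sub: "is_subalgebra \<sigma> \<delta> UNIV" by (simp add: is_subalgebra_def)
  show ?thesis using part2 sub free by auto
qed

end
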